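(* Let $n\ge1$. Then $Inn(Q_n)$ is an elementary abelian $2$-group of order $2^{2^n-2}$. Moreover, every $f\in Inn(Q_n)$ is a product of disjoint transpositions of the form $(x,-x)$, $x\in Q_n$.
   Context: Cayley--Dickson loops: $Q_0=\{1,-1\}\subset\mathbb{R}$ with conjugation $x^*=x$. For $n\ge1$, $Q_n=\{(x,0),(x,1)\mid x\in Q_{n-1}\}$ with multiplication $(x,0)(y,0)=(xy,0)$, $(x,0)(y,1)=(yx,1)$, $(x,1)(y,0)=(xy^*,1)$, $(x,1)(y,1)=(-y^*x,0)$ and conjugation $(x,0)^*=(x^*,0)$, $(x,1)^*=(-x,1)$, where $-(x,a)=(-x,a)$. $Q_n$ is a loop of order $2^{n+1}$ with neutral element $1=(1,0,\dots,0)$; $-1=(-1,0,\dots,0)$ and $-x=(-1)x$. For a loop $Q$, $L_x(a)=xa$, $R_x(a)=ax$, $Mlt(Q)=\langle L_x,R_x\mid x\in Q\rangle$ and $Inn(Q)=\{f\in Mlt(Q)\mid f(1)=1\}$. *)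

theory Defs
  imports Complex_Main "HOL-Algebra.Bij" "HOL-Algebra.Generated_Groups"
begin

text \<open>Elements of the Cayley--Dickson loops: an element of Q_0 is a real number
 (Sc r), an element of Q_n (n \<ge> 1) is a pair (x,a) with x in Q_(n-1) and a in {0,1},
 encoded as Pr x a with a :: bool (False = 0, True = 1).\<close>
datatype cd = Sc real | Pr cd bool

fun cd_neg :: "cd \<Rightarrow> cd" where
  "cd_neg (Sc r) = Sc (- r)"
| "cd_neg (Pr x a) = Pr (cd_neg x) a"

fun cd_conj :: "cd \<Rightarrow> cd" where
  "cd_conj (Sc r) = Sc r"
| "cd_conj (Pr x False) = Pr (cd_conj x) False"
| "cd_conj (Pr x True) = Pr (cd_neg x) True"

lemma size_cd_neg[simp]: "size (cd_neg x) = size x"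
  by (induction x) auto

lemma size_cd_conj[simp]: "size (cd_conj x) = size x"
  by (induction x rule: cd_conj.induct) auto

function cd_mult :: "cd \<Rightarrow> cd \<Rightarrow> cd" where
  "cd_mult (Sc r) (Sc s) = Sc (r * s)"
| "cd_mult (Pr x False) (Pr y False) = Pr (cd_mult x y) False"
| "cd_mult (Pr x False) (Pr y True) = Pr (cd_mult y x) True"
| "cd_mult (Pr x True) (Pr y False) = Pr (cd_mult x (cd_conj y)) True"
| "cd_mult (Pr x True) (Pr y True) = Pr (cd_neg (cd_mult (cd_conj y) x)) False"
| "cd_mult (Sc r) (Pr y b) = undefined"
| "cd_mult (Pr x a) (Sc s) = undefined"
  by pat_completeness auto
termination
  by (relation "measure (\<lambda>(x, y). size x + size y)") auto

fun Q :: "nat \<Rightarrow> cd set" where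
  "Q 0 = {Sc 1, Sc (-1)}"
| "Q (Suc n) = {Pr x a | x a. x \<in> Q n}"

fun cd_one :: "nat \<Rightarrow> cd" where
  "cd_one 0 = Sc 1"
| "cd_one (Suc n) = Pr (cd_one n) False"

definition Lmap :: "nat \<Rightarrow> cd \<Rightarrow> cd \<Rightarrow> cd" where
  "Lmap n x = restrict (\<lambda>a. cd_mult x a) (Q n)"

definition Rmap :: "nat \<Rightarrow> cd \<Rightarrow> cd \<Rightarrow> cd" where
  "Rmap n x = restrict (\<lambda>a. cd_mult a x) (Q n)"

definition Mlt :: "nat \<Rightarrow> (cd \<Rightarrow> cd) set" where
  "Mlt n = generate (BijGroup (Q n)) ((Lmap n ` Q n) \<union> (Rmap n ` Q n))"

definition Inn :: "nat \<Rightarrow> (cd \<Rightarrow> cd) set" where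
  "Inn n = {f \<in> Mlt n. f (cd_one n) = cd_one n}"

definition InnGroup :: "nat \<Rightarrow> (cd \<Rightarrow> cd) monoid" where
  "InnGroup n = (BijGroup (Q n))\<lparr>carrier := Inn n\<rparr>"

end

theory Submission
  imports Defs
begin


fun idx :: "cd \<Rightarrow> bool list" where
  "idx (Sc r) = []" | "idx (Pr x a) = a # idx x"
fun sg :: "cd \<Rightarrow> bool" where
  "sg (Sc r) = (r < 0)" | "sg (Pr x a) = sg x"
fun re :: "cd \<Rightarrow> bool" where
  "re (Sc r) = True" | "re (Pr x a) = (\<not> a \<and> re x)"
fun xorv :: "bool list \<Rightarrow> bool list \<Rightarrow> bool list" where
  "xorv (a # u) (b # v) = (a \<noteq> b) # xorv u v" | "xorv _ _ = []"

lemma Q_Suc_iff: "z \<in> Q (Suc n) \<longleftrightarrow> (\<exists>x a. z = Pr x a \<and> x \<in> Q n)"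
  by auto

lemma neg_neg[simp]: "cd_neg (cd_neg x) = x"
  by (induction x) auto
lemma idx_neg[simp]: "idx (cd_neg x) = idx x"
  by (induction x) auto
lemma re_neg[simp]: "re (cd_neg x) = re x"
  by (induction x) auto

lemma Q_neg: "x \<in> Q n \<Longrightarrow> cd_neg x \<in> Q n"
  by (induction n arbitrary: x) auto
lemma sg_neg: "x \<in> Q n \<Longrightarrow> sg (cd_neg x) = (\<not> sg x)"
  by (induction n arbitrary: x) auto
lemma neg_neq: "x \<in> Q n \<Longrightarrow> cd_neg x \<noteq> x"
  by (induction n arbitrary: x) auto
lemma len_idx: "x \<in> Q n \<Longrightarrow> length (idx x) = n"
  by (induction n arbitrary: x) auto
lemma conj_char: "x \<in> Q n \<Longrightarrow> cd_conj x = (if re x then x else cd_neg x)"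
proof (induction n arbitrary: x)
  case 0 then show ?case by auto
next
  case (Suc n) then obtain y a where "x = Pr y a" "y \<in> Q n" by auto
  with Suc show ?case by (cases a) auto
qed
lemma Q_conj: "x \<in> Q n \<Longrightarrow> cd_conj x \<in> Q n"
  using conj_char Q_neg by auto
lemma re_conj: "x \<in> Q n \<Longrightarrow> re (cd_conj x) = re x"
  using conj_char by auto
lemma idx_conj: "x \<in> Q n \<Longrightarrow> idx (cd_conj x) = idx x"
  using conj_char by auto
lemma conj_neg: "x \<in> Q n \<Longrightarrow> cd_conj (cd_neg x) = cd_neg (cd_conj x)"
  using conj_char[of x n] conj_char[of "cd_neg x" n] Q_neg by auto

lemma mult_Q: "x \<in> Q n \<Longrightarrow> y \<in> Q n \<Longrightarrow> cd_mult x y \<in> Q n"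
proof (induction n arbitrary: x y)
  case 0 then show ?case by auto
next
  case (Suc n)
  then obtain x' a y' b where "x = Pr x' a" "y = Pr y' b" "x' \<in> Q n" "y' \<in> Q n" by auto
  with Suc show ?case by (cases a; cases b) (auto simp: Q_conj Q_neg)
qed

lemma mult_neg: "x \<in> Q n \<Longrightarrow> y \<in> Q n \<Longrightarrow>
   cd_mult (cd_neg x) y = cd_neg (cd_mult x y) \<and> cd_mult x (cd_neg y) = cd_neg (cd_mult x y)"
proof (induction n arbitrary: x y)
  case 0 then show ?case by auto
next
  case (Suc n)
  then obtain x' a y' b where "x = Pr x' a" "y = Pr y' b" "x' \<in> Q n" "y' \<in> Q n" by auto
  with Suc show ?case by (cases a; cases b) (auto simp: Q_conj Q_neg conj_neg)
qed

lemma mult_negL[simp]: "x \<in> Q n \<Longrightarrow> y \<in> Q n \<Longrightarrow> cd_mult (cd_neg x) y = cd_neg (cd_mult x y)"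
  using mult_neg by blast
lemma mult_negR[simp]: "x \<in> Q n \<Longrightarrow> y \<in> Q n \<Longrightarrow> cd_mult x (cd_neg y) = cd_neg (cd_mult x y)"
  using mult_neg by blast

lemma xorv_comm: "xorv u v = xorv v u"
  by (induction u arbitrary: v) (auto, case_tac v, auto)

lemma idx_mult: "x \<in> Q n \<Longrightarrow> y \<in> Q n \<Longrightarrow> idx (cd_mult x y) = xorv (idx x) (idx y)"
proof (induction n arbitrary: x y)
  case 0 then show ?case by auto
next
  case (Suc n)
  then obtain x' a y' b where "x = Pr x' a" "y = Pr y' b" "x' \<in> Q n" "y' \<in> Q n" by auto
  with Suc show ?case by (cases a; cases b) (auto simp: Q_conj Q_neg idx_conj xorv_comm)
qed

lemma same_idx: "x \<in> Q n \<Longrightarrow> y \<in> Q n \<Longrightarrow> idx x = idx y \<Longrightarrow> y = x \<or> y = cd_neg x"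
proof (induction n arbitrary: x y)
  case 0 then show ?case by auto
next
  case (Suc n)
  then obtain x' a y' b where "x = Pr x' a" "y = Pr y' b" "x' \<in> Q n" "y' \<in> Q n" by auto
  with Suc show ?case by auto
qed

lemma one_Q: "cd_one n \<in> Q n" by (induction n) auto
lemma re_one: "re (cd_one n)" by (induction n) auto
lemma sg_one: "\<not> sg (cd_one n)" by (induction n) auto
lemma one_mult0: "y \<in> Q n \<Longrightarrow> cd_mult (cd_one n) y = y \<and> cd_mult y (cd_one n) = y"
proof (induction n arbitrary: y)
  case 0 then show ?case by auto
next
  case (Suc n)
  then obtain y' b where "y = Pr y' b" "y' \<in> Q n" by auto
  with Suc show ?case by (cases b) (auto simp: Q_conj re_one conj_char[OF one_Q])
qed
lemma one_mult: "y \<in> Q n \<Longrightarrow> cd_mult (cd_one n) y = y" using one_mult0 by blast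
lemma mult_one: "y \<in> Q n \<Longrightarrow> cd_mult y (cd_one n) = y" using one_mult0 by blast

lemma re_idx: "x \<in> Q n \<Longrightarrow> re x \<longleftrightarrow> idx x = idx (cd_one n)"
proof (induction n arbitrary: x)
  case 0 then show ?case by auto
next
  case (Suc n)
  then obtain y' b where "x = Pr y' b" "y' \<in> Q n" by auto
  with Suc show ?case by auto
qed

lemma re_cases: "x \<in> Q n \<Longrightarrow> re x \<Longrightarrow> x = cd_one n \<or> x = cd_neg (cd_one n)"
  using same_idx[OF one_Q, of x n] re_idx by auto

lemma re_multL: "x \<in> Q n \<Longrightarrow> y \<in> Q n \<Longrightarrow> re x \<Longrightarrow> cd_mult x y = (if sg x then cd_neg y else y)"
  using re_cases[of x n] one_mult[of y n] one_Q[of n] sg_one[of n] sg_neg[OF one_Q, of n] by auto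
lemma re_multR: "x \<in> Q n \<Longrightarrow> y \<in> Q n \<Longrightarrow> re x \<Longrightarrow> cd_mult y x = (if sg x then cd_neg y else y)"
  using re_cases[of x n] mult_one[of y n] one_Q[of n] sg_one[of n] sg_neg[OF one_Q, of n] by auto



lemma re_same: "x \<in> Q n \<Longrightarrow> y \<in> Q n \<Longrightarrow> idx x = idx y \<Longrightarrow> re x = re y"
  using re_idx by metis

lemma comm: "x \<in> Q n \<Longrightarrow> y \<in> Q n \<Longrightarrow>
  cd_mult y x = (if re x \<or> re y \<or> idx x = idx y then cd_mult x y else cd_neg (cd_mult x y))"
proof (induction n arbitrary: x y)
  case 0 then show ?case by auto
next
  case (Suc n)
  then obtain x' a y' b where xy: "x = Pr x' a" "y = Pr y' b" "x' \<in> Q n" "y' \<in> Q n" by auto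
  show ?case
  proof (cases a; cases b)
    assume "\<not> a" "\<not> b" then show ?thesis using xy Suc.IH[of x' y'] by auto
  next
    assume "\<not> a" "b" then show ?thesis using xy conj_char[of x' n]
      by (auto simp: Q_conj)
  next
    assume "a" "\<not> b" then show ?thesis using xy conj_char[of y' n]
      by (auto simp: Q_conj)
  next
    assume ab: "a" "b"
    have IH: "cd_mult y' x' = (if re x' \<or> re y' \<or> idx x' = idx y' then cd_mult x' y' else cd_neg (cd_mult x' y'))"
      using Suc.IH xy by blast
    have m: "cd_mult x' y' \<in> Q n" "cd_mult y' x' \<in> Q n" using xy mult_Q by auto
    show ?thesis using xy ab conj_char[of y' n] conj_char[of x' n] IH m
      re_multL[of x' n y'] re_multL[of y' n x'] re_multR[of x' n y'] re_multR[of y' n x'] 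
      re_same[of x' n y'] re_idx[of x' n] re_idx[of y' n] neg_neq[of "cd_mult x' y'" n] neg_neq[of "cd_mult y' x'" n]
      by (auto simp: Q_conj Q_neg)
  qed
qed

lemma re_mult: "x \<in> Q n \<Longrightarrow> y \<in> Q n \<Longrightarrow> re (cd_mult x y) = (idx x = idx y)"
proof (induction n arbitrary: x y)
  case 0 then show ?case by auto
next
  case (Suc n)
  then obtain x' a y' b where "x = Pr x' a" "y = Pr y' b" "x' \<in> Q n" "y' \<in> Q n" by auto
  with Suc show ?case by (cases a; cases b) (auto simp: Q_conj idx_conj)
qed

lemma conj_conj: "x \<in> Q n \<Longrightarrow> cd_conj (cd_conj x) = x"
  using conj_char[of x n] conj_char[of "cd_conj x" n] Q_conj[of x n] re_conj[of x n] by auto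

lemma anti: "x \<in> Q n \<Longrightarrow> y \<in> Q n \<Longrightarrow> cd_conj (cd_mult x y) = cd_mult (cd_conj y) (cd_conj x)"
  using conj_char[of x n] conj_char[of y n] conj_char[of "cd_mult x y" n] mult_Q[of x n y]
    re_mult[of x n y] comm[of x n y] re_same[of x n y] re_idx[of x n] re_idx[of y n] by (auto simp: Q_neg)

lemma alt: "x \<in> Q n \<Longrightarrow> y \<in> Q n \<Longrightarrow>
   cd_mult x (cd_mult x y) = (if re x then y else cd_neg y) \<and>
   cd_mult (cd_mult y x) x = (if re x then y else cd_neg y)"
proof (induction n arbitrary: x y)
  case 0 then show ?case by auto
next
  case (Suc n)
  then obtain x' a y' b where xy: "x = Pr x' a" "y = Pr y' b" "x' \<in> Q n" "y' \<in> Q n" by auto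
  have I: "cd_mult x' (cd_mult x' y') = (if re x' then y' else cd_neg y')"
          "cd_mult (cd_mult y' x') x' = (if re x' then y' else cd_neg y')"
    using Suc.IH xy by blast+
  have m: "cd_mult x' y' \<in> Q n" "cd_mult y' x' \<in> Q n" "cd_neg x' \<in> Q n" "cd_neg y' \<in> Q n"
    "cd_conj x' \<in> Q n" "cd_conj y' \<in> Q n"
    using xy mult_Q Q_neg Q_conj by auto
  show ?case
  proof (cases a; cases b)
    assume "\<not> a" "\<not> b" then show ?thesis using xy I by auto
  next
    assume "\<not> a" "b" then show ?thesis using xy I conj_char[of x' n] m
      mult_negL[of "cd_mult y' x'" n "cd_neg x'"] mult_negR[of "cd_mult y' x'" n x']
      by auto
  next
    assume "a" "\<not> b" then show ?thesis using xy I conj_char[of x' n] anti[of x' n "cd_conj y'"]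
       conj_conj[of y' n] m  mult_negR[of "y'" n x'] mult_negL[of "cd_mult y' x'" n x'] 
      by auto
  next
    assume ab: "a" "b" 
    have c: "cd_conj (cd_mult (cd_conj y') x') = cd_mult (cd_conj x') y'"
      using anti[of "cd_conj y'" n x'] conj_conj[of y' n] m xy by auto
    have c2: "cd_conj (cd_mult (cd_conj x') y') = cd_mult (cd_conj y') x'"
      using anti[of "cd_conj x'" n y'] conj_conj[of x' n] m xy by auto
    have d: "cd_conj (cd_neg (cd_mult (cd_conj y') x')) = cd_neg (cd_mult (cd_conj x') y')"
      using conj_neg[of "cd_mult (cd_conj y') x'" n] c m mult_Q[of "cd_conj y'" n x'] xy by auto
    have d2: "cd_conj (cd_neg (cd_mult (cd_conj x') y')) = cd_neg (cd_mult (cd_conj y') x')"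
      using conj_neg[of "cd_mult (cd_conj x') y'" n] c2 m mult_Q[of "cd_conj x'" n y'] xy by auto
    have e1: "cd_mult x y = Pr (cd_neg (cd_mult (cd_conj y') x')) False" using xy ab by simp
    have e2: "cd_mult x (cd_mult x y) = Pr (cd_neg (cd_mult x' (cd_mult (cd_conj x') y'))) True"
      using xy ab e1 d m mult_negR[of x' n "cd_mult (cd_conj x') y'"] mult_Q[of "cd_conj x'" n y'] by simp
    have e3: "cd_mult y x = Pr (cd_neg (cd_mult (cd_conj x') y')) False" using xy ab by simp
    have e4: "cd_mult (cd_mult y x) x = Pr (cd_neg (cd_mult x' (cd_mult (cd_conj x') y'))) True"
      using xy ab e3 m mult_negR[of x' n "cd_mult (cd_conj x') y'"] mult_Q[of "cd_conj x'" n y'] by simp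
    have f: "cd_mult x' (cd_mult (cd_conj x') y') = y'"
    proof (cases "re x'")
      case True then show ?thesis using conj_char[of x' n] xy I by simp
    next
      case False then show ?thesis using conj_char[of x' n] xy I mult_negL[of x' n y']
        mult_negR[of x' n "cd_mult x' y'"] m by simp
    qed
    show ?thesis using e2 e4 f xy ab by auto
  qed
qed



lemma finite_Q: "finite (Q n)"
proof (induction n)
  case 0 then show ?case by simp
next
  case (Suc n)
  have "Q (Suc n) = (\<lambda>(x,a). Pr x a) ` (Q n \<times> UNIV)" by auto
  then show ?case using Suc by simp
qed

definition P :: "nat \<Rightarrow> cd set" where "P n = {x \<in> Q n. \<not> sg x}"

lemma P_Suc: "P (Suc n) = (\<lambda>(x,a). Pr x a) ` (P n \<times> UNIV)"
  unfolding P_def by auto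

lemma card_P: "card (P n) = 2 ^ n"
proof (induction n)
  case 0 have "P 0 = {Sc 1}" unfolding P_def by auto
  then show ?case by simp
next
  case (Suc n)
  have "inj_on (\<lambda>(x,a). Pr x a) (P n \<times> (UNIV::bool set))" by (auto simp: inj_on_def)
  then have "card (P (Suc n)) = card (P n \<times> (UNIV::bool set))" unfolding P_Suc by (rule card_image)
  also have "\<dots> = 2 ^ n * 2" using Suc by (simp add: card_cartesian_product)
  finally show ?case by simp
qed

lemma finite_P: "finite (P n)" unfolding P_def using finite_Q by simp

definition rp :: "cd \<Rightarrow> cd" where "rp z = (if sg z then cd_neg z else z)"

lemma rp_P: "z \<in> Q n \<Longrightarrow> rp z \<in> P n"
  unfolding rp_def P_def using Q_neg sg_neg by auto

lemma xorv_cancel: "length u = length a \<Longrightarrow> length a = length b \<Longrightarrow>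
   xorv (xorv u a) (xorv u b) = xorv a b"
proof (induction u arbitrary: a b)
  case Nil then show ?case by auto
next
  case (Cons c u) then show ?case by (cases a; cases b) auto
qed

lemma xorv_cancelR: "length u = length a \<Longrightarrow> length a = length b \<Longrightarrow>
   xorv (xorv a u) (xorv b u) = xorv a b"
  using xorv_cancel xorv_comm by metis

definition good :: "nat \<Rightarrow> (cd \<Rightarrow> cd) \<Rightarrow> bool" where
  "good n f \<longleftrightarrow> f \<in> Bij (Q n) \<and> (\<forall>x\<in>Q n. f (cd_neg x) = cd_neg (f x)) \<and>
     (\<forall>x\<in>Q n. \<forall>y\<in>Q n. xorv (idx (f x)) (idx (f y)) = xorv (idx x) (idx y))"

lemma L_Bij: "x \<in> Q n \<Longrightarrow> Lmap n x \<in> Bij (Q n)"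
  unfolding Bij_def Lmap_def
proof (intro IntI CollectI)
  assume x: "x \<in> Q n"
  show "restrict (cd_mult x) (Q n) \<in> extensional (Q n)" by simp
  let ?g = "\<lambda>z. if re x then cd_mult x z else cd_neg (cd_mult x z)"
  show "bij_betw (restrict (cd_mult x) (Q n)) (Q n) (Q n)"
  proof (rule bij_betw_byWitness[where f' = ?g])
    show "\<forall>a\<in>Q n. ?g (restrict (cd_mult x) (Q n) a) = a"
      using x alt[of x n] by (auto simp: mult_Q)
    show "\<forall>a\<in>Q n. restrict (cd_mult x) (Q n) (?g a) = a"
      using x alt[of x n] by (auto simp: mult_Q Q_neg)
    show "restrict (cd_mult x) (Q n) ` Q n \<subseteq> Q n" using x by (auto simp: mult_Q)
    show "?g ` Q n \<subseteq> Q n" using x by (auto simp: mult_Q Q_neg)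
  qed
qed

lemma R_Bij: "x \<in> Q n \<Longrightarrow> Rmap n x \<in> Bij (Q n)"
  unfolding Bij_def Rmap_def
proof (intro IntI CollectI)
  assume x: "x \<in> Q n"
  show "restrict (\<lambda>a. cd_mult a x) (Q n) \<in> extensional (Q n)" by simp
  let ?g = "\<lambda>z. if re x then cd_mult z x else cd_neg (cd_mult z x)"
  show "bij_betw (restrict (\<lambda>a. cd_mult a x) (Q n)) (Q n) (Q n)"
  proof (rule bij_betw_byWitness[where f' = ?g])
    show "\<forall>a\<in>Q n. ?g (restrict (\<lambda>a. cd_mult a x) (Q n) a) = a"
    proof
      fix a assume a: "a \<in> Q n"
      show "?g (restrict (\<lambda>a. cd_mult a x) (Q n) a) = a"
        using x a alt[of x n a] mult_negL[of "cd_mult a x" n x] by (auto simp: mult_Q)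
    qed
    show "\<forall>a\<in>Q n. restrict (\<lambda>a. cd_mult a x) (Q n) (?g a) = a"
    proof
      fix a assume a: "a \<in> Q n"
      show "restrict (\<lambda>a. cd_mult a x) (Q n) (?g a) = a"
        using x a alt[of x n a] mult_negL[of "cd_mult a x" n x] by (auto simp: mult_Q Q_neg)
    qed
    show "restrict (\<lambda>a. cd_mult a x) (Q n) ` Q n \<subseteq> Q n" using x by (auto simp: mult_Q)
    show "?g ` Q n \<subseteq> Q n" using x by (auto simp: mult_Q Q_neg)
  qed
qed

lemma good_L: "x \<in> Q n \<Longrightarrow> good n (Lmap n x)"
  unfolding good_def using L_Bij[of x n]
  by (auto simp: Lmap_def Q_neg idx_mult xorv_cancel len_idx)

lemma good_R: "x \<in> Q n \<Longrightarrow> good n (Rmap n x)"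
  unfolding good_def using R_Bij[of x n]
  by (auto simp: Rmap_def Q_neg idx_mult xorv_cancelR len_idx)

lemma Bij_in: "f \<in> Bij S \<Longrightarrow> x \<in> S \<Longrightarrow> f x \<in> S"
  using Bij_imp_funcset by blast

lemma good_compose: "good n f \<Longrightarrow> good n g \<Longrightarrow> good n (compose (Q n) f g)"
proof -
  assume f: "good n f" and g: "good n g"
  have "compose (Q n) f g \<in> Bij (Q n)" using f g compose_Bij unfolding good_def by blast
  then show ?thesis using f g unfolding good_def
    by (simp add: compose_def Q_neg Bij_in)
qed

lemma Bij_inv: "f \<in> Bij S \<Longrightarrow> x \<in> S \<Longrightarrow> inv_into S f x \<in> S \<and> f (inv_into S f x) = x"
  unfolding Bij_def bij_betw_def by (auto simp: inv_into_into f_inv_into_f)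

lemma Bij_injD: "f \<in> Bij S \<Longrightarrow> x \<in> S \<Longrightarrow> y \<in> S \<Longrightarrow> f x = f y \<Longrightarrow> x = y"
  unfolding Bij_def bij_betw_def inj_on_def by blast

lemma good_inv: "good n f \<Longrightarrow> good n (restrict (inv_into (Q n) f) (Q n))"
proof -
  assume gd: "good n f"
  have B: "f \<in> Bij (Q n)" and N: "\<And>x. x \<in> Q n \<Longrightarrow> f (cd_neg x) = cd_neg (f x)"
    and X: "\<And>x y. x \<in> Q n \<Longrightarrow> y \<in> Q n \<Longrightarrow> xorv (idx (f x)) (idx (f y)) = xorv (idx x) (idx y)"
    using gd unfolding good_def by auto
  let ?g = "restrict (inv_into (Q n) f) (Q n)"
  have i: "\<And>x. x \<in> Q n \<Longrightarrow> ?g x \<in> Q n \<and> f (?g x) = x" using Bij_inv[OF B] by simp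
  have "?g \<in> Bij (Q n)" using restrict_inv_into_Bij[OF B] .
  moreover have "\<forall>x\<in>Q n. ?g (cd_neg x) = cd_neg (?g x)"
  proof
    fix x assume x: "x \<in> Q n"
    have "f (cd_neg (?g x)) = cd_neg x" using N i x by metis
    moreover have "f (?g (cd_neg x)) = cd_neg x" using i Q_neg x by blast
    ultimately show "?g (cd_neg x) = cd_neg (?g x)"
      using Bij_injD[OF B, of "?g (cd_neg x)" "cd_neg (?g x)"] i Q_neg x by metis
  qed
  moreover have "\<forall>x\<in>Q n. \<forall>y\<in>Q n. xorv (idx (?g x)) (idx (?g y)) = xorv (idx x) (idx y)"
  proof (intro ballI)
    fix x y assume x: "x \<in> Q n" and y: "y \<in> Q n"
    have "xorv (idx (f (?g x))) (idx (f (?g y))) = xorv (idx (?g x)) (idx (?g y))"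
      using X i x y by blast
    then show "xorv (idx (?g x)) (idx (?g y)) = xorv (idx x) (idx y)" using i x y by simp
  qed
  ultimately show ?thesis unfolding good_def by blast
qed

lemma BijGroup_mult: "f \<in> Bij S \<Longrightarrow> g \<in> Bij S \<Longrightarrow> f \<otimes>\<^bsub>BijGroup S\<^esub> g = compose S f g"
  by (simp add: BijGroup_def)

lemma Mlt_good: "f \<in> Mlt n \<Longrightarrow> good n f"
  unfolding Mlt_def
proof (induction rule: generate.induct)
  case one
  then show ?case unfolding good_def by (simp add: BijGroup_def id_Bij Q_neg)
next
  case (incl h)
  then show ?case using good_L good_R by auto
next
  case (inv h)
  then have "good n h" using good_L good_R by auto
  then have "h \<in> Bij (Q n)" unfolding good_def by blast
  then show ?case using inv_BijGroup[of h "Q n"] good_inv[OF \<open>good n h\<close>] by metis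
next
  case (eng h1 h2)
  then have "h1 \<in> Bij (Q n)" "h2 \<in> Bij (Q n)" unfolding good_def by blast+
  then show ?case using BijGroup_mult[of h1 "Q n" h2] good_compose eng by simp
qed



definition cnt :: "nat \<Rightarrow> (cd \<Rightarrow> cd) \<Rightarrow> nat" where
  "cnt n f = card {x \<in> P n. sg (f x)}"

lemma symdiff_parity: "finite B \<Longrightarrow> finite C \<Longrightarrow>
  even (card ((B - C) \<union> (C - B))) \<longleftrightarrow> (even (card B) \<longleftrightarrow> even (card C))"
proof -
  assume fb: "finite B" and fc: "finite C"
  have "card ((B - C) \<union> (C - B)) = card (B - C) + card (C - B)"
    using fb fc by (intro card_Un_disjoint) auto
  moreover have "card B = card (B - C) + card (B \<inter> C)"
    using card_Int_Diff[OF fb, of C] by simp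
  moreover have "card C = card (C - B) + card (B \<inter> C)"
    using card_Int_Diff[OF fc, of B] by (simp add: Int_commute)
  ultimately show ?thesis by auto
qed

lemma bij_card_filter: "bij_betw h A A \<Longrightarrow> card {x \<in> A. R (h x)} = card {y \<in> A. R y}"
proof -
  assume b: "bij_betw h A A"
  have "h ` {x \<in> A. R (h x)} = {y \<in> A. R y}" using b unfolding bij_betw_def by auto
  moreover have "inj_on h {x \<in> A. R (h x)}" using b unfolding bij_betw_def
    by (auto intro: inj_on_subset)
  ultimately show ?thesis by (metis card_image)
qed

lemma P_Q: "x \<in> P n \<Longrightarrow> x \<in> Q n" unfolding P_def by auto

lemma rp_cases: "z \<in> Q n \<Longrightarrow> (sg z \<and> z = cd_neg (rp z)) \<or> (\<not> sg z \<and> z = rp z)"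
  unfolding rp_def by auto

lemma good_rp_bij: "good n g \<Longrightarrow> bij_betw (\<lambda>x. rp (g x)) (P n) (P n)"
proof -
  assume gd: "good n g"
  have B: "g \<in> Bij (Q n)" and N: "\<And>x. x \<in> Q n \<Longrightarrow> g (cd_neg x) = cd_neg (g x)"
    using gd unfolding good_def by auto
  have sub: "(\<lambda>x. rp (g x)) ` P n \<subseteq> P n" using rp_P Bij_in[OF B] P_Q by blast
  have inj: "inj_on (\<lambda>x. rp (g x)) (P n)"
  proof (rule inj_onI)
    fix x y assume x: "x \<in> P n" and y: "y \<in> P n" and e: "rp (g x) = rp (g y)"
    have gx: "g x \<in> Q n" "g y \<in> Q n" using x y Bij_in[OF B] P_Q by blast+
    have xq: "x \<in> Q n" "y \<in> Q n" "\<not> sg x" "\<not> sg y" using x y unfolding P_def by auto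
    from e gx have "g x = g y \<or> g x = cd_neg (g y)" unfolding rp_def
      by (auto split: if_splits simp: sg_neg) (metis neg_neg)+
    then show "x = y"
    proof
      assume "g x = g y" then show ?thesis using Bij_injD[OF B] xq by blast
    next
      assume "g x = cd_neg (g y)"
      then have "g x = g (cd_neg y)" using N xq by simp
      then have "x = cd_neg y" using Bij_injD[OF B] xq Q_neg by blast
      then show ?thesis using xq sg_neg by auto
    qed
  qed
  show ?thesis unfolding bij_betw_def using inj endo_inj_surj[OF finite_P sub inj] by blast
qed

lemma cnt_compose: "good n f \<Longrightarrow> good n g \<Longrightarrow>
   even (cnt n (compose (Q n) f g)) \<longleftrightarrow> (even (cnt n f) \<longleftrightarrow> even (cnt n g))"
proof -
  assume gf: "good n f" and gg: "good n g"
  have Bg: "g \<in> Bij (Q n)" using gg unfolding good_def by auto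
  have Nf: "\<And>x. x \<in> Q n \<Longrightarrow> f (cd_neg x) = cd_neg (f x)" using gf unfolding good_def by auto
  have Bf: "f \<in> Bij (Q n)" using gf unfolding good_def by auto
  let ?B = "{x \<in> P n. sg (g x)}" and ?C = "{x \<in> P n. sg (f (rp (g x)))}"
  have e: "{x \<in> P n. sg (compose (Q n) f g x)} = (?B - ?C) \<union> (?C - ?B)"
  proof -
    have "\<And>x. x \<in> P n \<Longrightarrow> sg (compose (Q n) f g x) = (sg (g x) \<noteq> sg (f (rp (g x))))"
    proof -
      fix x assume x: "x \<in> P n"
      then have gx: "g x \<in> Q n" using Bij_in[OF Bg] P_Q by blast
      have r: "rp (g x) \<in> Q n" using rp_P[OF gx] P_Q by blast
      have fr: "f (rp (g x)) \<in> Q n" using Bij_in[OF Bf r] .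
      have c: "compose (Q n) f g x = f (g x)" using x P_Q by (simp add: compose_def)
      show "sg (compose (Q n) f g x) = (sg (g x) \<noteq> sg (f (rp (g x))))"
      proof (cases "sg (g x)")
        case True
        then have "g x = cd_neg (rp (g x))" unfolding rp_def by simp
        then have "f (g x) = cd_neg (f (rp (g x)))" using Nf[OF r] by simp
        then show ?thesis using c sg_neg[OF fr] True by simp
      next
        case False
        then have "g x = rp (g x)" unfolding rp_def by simp
        then show ?thesis using c False by simp
      qed
    qed
    then show ?thesis by auto
  qed
  have "card ?C = cnt n f" unfolding cnt_def using bij_card_filter[OF good_rp_bij[OF gg], of "\<lambda>y. sg (f y)"] by simp
  moreover have "card ?B = cnt n g" unfolding cnt_def by simp
  moreover have "finite ?B" "finite ?C" using finite_P by auto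
  ultimately show ?thesis unfolding cnt_def e using symdiff_parity[of ?B ?C] by (simp only:) blast
qed

lemma inv_count: "finite S \<Longrightarrow> A \<subseteq> S \<Longrightarrow> (\<forall>y\<in>A. \<phi> y \<in> S - A) \<Longrightarrow> (\<forall>y\<in>S - A. \<phi> y \<in> A)
  \<Longrightarrow> (\<forall>y\<in>S. \<phi> (\<phi> y) = y) \<Longrightarrow> card S = 2 * card A"
proof -
  assume fs: "finite S" and sub: "A \<subseteq> S" and m1: "\<forall>y\<in>A. \<phi> y \<in> S - A"
    and m2: "\<forall>y\<in>S - A. \<phi> y \<in> A" and inv: "\<forall>y\<in>S. \<phi> (\<phi> y) = y"
  have "bij_betw \<phi> A (S - A)"
    by (rule bij_betw_byWitness[where f'=\<phi>]) (use m1 m2 inv sub in auto)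
  then have "card A = card (S - A)" by (rule bij_betw_same_card)
  moreover have "card S = card A + card (S - A)" using fs sub
    by (metis card_Diff_subset finite_subset le_add_diff_inverse card_mono)
  ultimately show ?thesis by simp
qed

lemma quarter: "2 \<le> n \<Longrightarrow> (\<forall>y\<in>Q n. h y \<in> Q n \<and> h (h y) = cd_neg y \<and> h (cd_neg y) = cd_neg (h y))
   \<Longrightarrow> even (card {y \<in> P n. sg (h y)})"
proof -
  assume n: "2 \<le> n" and H: "\<forall>y\<in>Q n. h y \<in> Q n \<and> h (h y) = cd_neg y \<and> h (cd_neg y) = cd_neg (h y)"
  let ?A = "{y \<in> P n. sg (h y)}"
  let ?phi = "\<lambda>y. rp (h y)"
  have key: "\<And>y. y \<in> P n \<Longrightarrow> ?phi y \<in> P n \<and> (y \<in> ?A \<longleftrightarrow> ?phi y \<notin> ?A) \<and> ?phi (?phi y) = y"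
  proof -
    fix y assume y: "y \<in> P n"
    have yq: "y \<in> Q n" "\<not> sg y" using y unfolding P_def by auto
    have hy: "h y \<in> Q n" "h (h y) = cd_neg y" "h (cd_neg (h y)) = cd_neg (h (h y))" using H yq by auto
    show "?phi y \<in> P n \<and> (y \<in> ?A \<longleftrightarrow> ?phi y \<notin> ?A) \<and> ?phi (?phi y) = y"
    proof (cases "sg (h y)")
      case True
      then have p: "?phi y = cd_neg (h y)" unfolding rp_def by simp
      have "h (?phi y) = y" using p hy by simp
      then show ?thesis using p True y yq rp_P[OF hy(1)] unfolding rp_def by auto
    next
      case False
      then have p: "?phi y = h y" unfolding rp_def by simp
      have "h (?phi y) = cd_neg y" using p hy by simp
      then show ?thesis using p False y yq rp_P[OF hy(1)] sg_neg[OF yq(1)] unfolding rp_def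
        by (auto simp: Q_neg)
    qed
  qed
  have "card (P n) = 2 * card ?A"
    by (rule inv_count[where \<phi> = ?phi]) (use finite_P key in auto)
  then have "2 * card ?A = 2 ^ n" using card_P by simp
  then have "card ?A = 2 ^ (n - 1)" using n by (cases n) auto
  then show ?thesis using n by simp
qed

lemma cnt_L: "2 \<le> n \<Longrightarrow> x \<in> Q n \<Longrightarrow> even (cnt n (Lmap n x))"
proof -
  assume n: "2 \<le> n" and x: "x \<in> Q n"
  have "{y \<in> P n. sg (Lmap n x y)} = {y \<in> P n. sg (cd_mult x y)}"
    by (auto simp: Lmap_def P_def)
  then have e: "cnt n (Lmap n x) = card {y \<in> P n. sg (cd_mult x y)}"
    unfolding cnt_def by simp
  show ?thesis
  proof (cases "re x")
    case True
    then have "x = cd_one n \<or> x = cd_neg (cd_one n)" using re_cases x by blast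
    then show ?thesis
    proof
      assume o: "x = cd_one n"
      have "\<forall>y\<in>P n. \<not> sg (cd_mult x y)" unfolding o P_def by (simp add: one_mult)
      then have E: "{y \<in> P n. sg (cd_mult x y)} = {}" by blast
      show ?thesis unfolding e E by simp
    next
      assume o: "x = cd_neg (cd_one n)"
      have "\<forall>y\<in>P n. sg (cd_mult x y)" unfolding o P_def
      proof (intro ballI)
        fix y assume "y \<in> {x \<in> Q n. \<not> sg x}"
        then have y: "y \<in> Q n" "\<not> sg y" by auto
        show "sg (cd_mult (cd_neg (cd_one n)) y)" using mult_negL[OF one_Q y(1)] one_mult[OF y(1)] sg_neg[OF y(1)] y by simp
      qed
      then have "{y \<in> P n. sg (cd_mult x y)} = P n" by blast
      then show ?thesis using e card_P n by simp
    qed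
  next
    case False
    have "\<forall>y\<in>Q n. cd_mult x y \<in> Q n \<and> cd_mult x (cd_mult x y) = cd_neg y \<and>
        cd_mult x (cd_neg y) = cd_neg (cd_mult x y)"
    proof
      fix y assume y: "y \<in> Q n"
      show "cd_mult x y \<in> Q n \<and> cd_mult x (cd_mult x y) = cd_neg y \<and>
        cd_mult x (cd_neg y) = cd_neg (cd_mult x y)"
        using mult_Q[OF x y] alt[OF x y] False mult_negR[OF x y] by simp
    qed
    then have "even (card {y \<in> P n. sg (cd_mult x y)})" by (rule quarter[OF n])
    then show ?thesis using e by simp
  qed
qed

lemma cnt_R: "2 \<le> n \<Longrightarrow> x \<in> Q n \<Longrightarrow> even (cnt n (Rmap n x))"
proof -
  assume n: "2 \<le> n" and x: "x \<in> Q n"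
  have "{y \<in> P n. sg (Rmap n x y)} = {y \<in> P n. sg (cd_mult y x)}"
    by (auto simp: Rmap_def P_def)
  then have e: "cnt n (Rmap n x) = card {y \<in> P n. sg (cd_mult y x)}"
    unfolding cnt_def by simp
  show ?thesis
  proof (cases "re x")
    case True
    then have "x = cd_one n \<or> x = cd_neg (cd_one n)" using re_cases x by blast
    then show ?thesis
    proof
      assume o: "x = cd_one n"
      have "\<forall>y\<in>P n. \<not> sg (cd_mult y x)" unfolding o P_def by (simp add: mult_one)
      then have E: "{y \<in> P n. sg (cd_mult y x)} = {}" by blast
      show ?thesis unfolding e E by simp
    next
      assume o: "x = cd_neg (cd_one n)"
      have "\<forall>y\<in>P n. sg (cd_mult y x)" unfolding o P_def
      proof (intro ballI)
        fix y assume "y \<in> {x \<in> Q n. \<not> sg x}"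
        then have y: "y \<in> Q n" "\<not> sg y" by auto
        show "sg (cd_mult y (cd_neg (cd_one n)))" using mult_negR[OF y(1) one_Q] mult_one[OF y(1)] sg_neg[OF y(1)] y by simp
      qed
      then have "{y \<in> P n. sg (cd_mult y x)} = P n" by blast
      then show ?thesis using e card_P n by simp
    qed
  next
    case False
    have "\<forall>y\<in>Q n. cd_mult y x \<in> Q n \<and> cd_mult (cd_mult y x) x = cd_neg y \<and>
        cd_mult (cd_neg y) x = cd_neg (cd_mult y x)"
    proof
      fix y assume y: "y \<in> Q n"
      show "cd_mult y x \<in> Q n \<and> cd_mult (cd_mult y x) x = cd_neg y \<and>
        cd_mult (cd_neg y) x = cd_neg (cd_mult y x)"
        using mult_Q[OF y x] alt[OF x y] False mult_negL[OF y x] by simp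
    qed
    then have "even (card {y \<in> P n. sg (cd_mult y x)})" by (rule quarter[OF n])
    then show ?thesis using e by simp
  qed
qed

lemma Mlt_even: "2 \<le> n \<Longrightarrow> f \<in> Mlt n \<Longrightarrow> even (cnt n f)"
proof -
  assume n: "2 \<le> n" and f: "f \<in> Mlt n"
  from f show ?thesis
  unfolding Mlt_def
  proof (induction rule: generate.induct)
    case one
    have E: "{x \<in> P n. sg (restrict (\<lambda>x. x) (Q n) x)} = {}" unfolding P_def by auto
    have O: "\<one>\<^bsub>BijGroup (Q n)\<^esub> = restrict (\<lambda>x. x) (Q n)" by (simp add: BijGroup_def)
    show ?case unfolding cnt_def O E by simp
  next
    case (incl h)
    then show ?case using cnt_L[OF n] cnt_R[OF n] by auto
  next
    case (inv h)
    then have g: "good n h" using good_L good_R by auto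
    then have B: "h \<in> Bij (Q n)" unfolding good_def by blast
    have ev: "even (cnt n h)" using inv cnt_L[OF n] cnt_R[OF n] by auto
    have "compose (Q n) (restrict (inv_into (Q n) h) (Q n)) h = restrict (\<lambda>x. x) (Q n)"
      using Bij_compose_restrict_eq[OF B] .
    moreover have E: "{x \<in> P n. sg (restrict (\<lambda>x. x) (Q n) x)} = {}" using P_Q unfolding P_def by auto
    ultimately have "even (cnt n (compose (Q n) (restrict (inv_into (Q n) h) (Q n)) h))"
      unfolding cnt_def by (simp only: E card.empty even_zero)
    then have "even (cnt n (restrict (inv_into (Q n) h) (Q n)))"
      using cnt_compose[OF good_inv[OF g] g] ev by simp
    then show ?case unfolding inv_BijGroup[OF B] .
  next
    case (eng h1 h2)
    have g: "good n h1" "good n h2" using eng(1,2) Mlt_good unfolding Mlt_def by blast+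
    then have "h1 \<in> Bij (Q n)" "h2 \<in> Bij (Q n)" unfolding good_def by blast+
    then show ?case using BijGroup_mult[of h1 "Q n" h2] cnt_compose[OF g] eng by simp
  qed
qed



lemma idx_one: "idx (cd_one n) = replicate n False" by (induction n) auto

lemma xorv_zero: "length u = n \<Longrightarrow> xorv u (replicate n False) = u"
proof (induction u arbitrary: n)
  case Nil then show ?case by simp
next
  case (Cons a u) then show ?case by (cases n) auto
qed

lemma Mlt_sub: "subgroup (Mlt n) (BijGroup (Q n))"
  unfolding Mlt_def
  by (rule group.generate_is_subgroup[OF group_BijGroup]) (auto simp: BijGroup_def L_Bij R_Bij)

lemma Inn_good: "f \<in> Inn n \<Longrightarrow> good n f \<and> f (cd_one n) = cd_one n"
  unfolding Inn_def using Mlt_good by auto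

lemma Inn_sign: "f \<in> Inn n \<Longrightarrow> x \<in> Q n \<Longrightarrow> f x = x \<or> f x = cd_neg x"
proof -
  assume f: "f \<in> Inn n" and x: "x \<in> Q n"
  have g: "good n f" and o: "f (cd_one n) = cd_one n" using Inn_good[OF f] by auto
  have fB: "f \<in> Bij (Q n)" using g unfolding good_def by (elim conjE)
  have fx: "f x \<in> Q n" using Bij_in[OF fB x] .
  have X: "\<forall>x\<in>Q n. \<forall>y\<in>Q n. xorv (idx (f x)) (idx (f y)) = xorv (idx x) (idx y)"
    using g unfolding good_def by (elim conjE)
  have "xorv (idx (f x)) (idx (f (cd_one n))) = xorv (idx x) (idx (cd_one n))"
    using X x one_Q by blast
  then have "xorv (idx (f x)) (replicate n False) = xorv (idx x) (replicate n False)"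
    unfolding o idx_one .
  then have "idx (f x) = idx x" using xorv_zero[OF len_idx[OF x]] xorv_zero[OF len_idx[OF fx]] by simp
  then show ?thesis using same_idx[OF x fx] by simp
qed

lemma Inn_neg: "f \<in> Inn n \<Longrightarrow> x \<in> Q n \<Longrightarrow> f (cd_neg x) = cd_neg (f x)"
proof -
  assume "f \<in> Inn n" "x \<in> Q n"
  then have "good n f" using Inn_good by blast
  then show ?thesis using \<open>x \<in> Q n\<close> unfolding good_def by blast
qed

lemma Inn_Bij: "f \<in> Inn n \<Longrightarrow> f \<in> Bij (Q n)"
proof -
  assume "f \<in> Inn n"
  then have "good n f" using Inn_good by blast
  then show ?thesis unfolding good_def by blast
qed

lemma Inn_sub: "subgroup (Inn n) (BijGroup (Q n))"
proof -
  interpret M: subgroup "Mlt n" "BijGroup (Q n)" by (rule Mlt_sub)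
  show ?thesis
  proof
    show "Inn n \<subseteq> carrier (BijGroup (Q n))" unfolding Inn_def using M.subset by blast
  next
    fix f g assume f: "f \<in> Inn n" and g: "g \<in> Inn n"
    have B: "f \<in> Bij (Q n)" "g \<in> Bij (Q n)" using f g Inn_Bij by auto
    have fm: "f \<in> Mlt n" "f (cd_one n) = cd_one n" using f unfolding Inn_def by blast+
    have gm: "g \<in> Mlt n" "g (cd_one n) = cd_one n" using g unfolding Inn_def by blast+
    have "f \<otimes>\<^bsub>BijGroup (Q n)\<^esub> g \<in> Mlt n" using M.m_closed[OF fm(1) gm(1)] .
    moreover have "(f \<otimes>\<^bsub>BijGroup (Q n)\<^esub> g) (cd_one n) = cd_one n"
      unfolding BijGroup_mult[OF B] compose_def using fm(2) gm(2) one_Q by simp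
    ultimately show "f \<otimes>\<^bsub>BijGroup (Q n)\<^esub> g \<in> Inn n" unfolding Inn_def by blast
  next
    have "\<one>\<^bsub>BijGroup (Q n)\<^esub> \<in> Mlt n" by (rule M.one_closed)
    moreover have "\<one>\<^bsub>BijGroup (Q n)\<^esub> (cd_one n) = cd_one n" using one_Q by (simp add: BijGroup_def)
    ultimately show "\<one>\<^bsub>BijGroup (Q n)\<^esub> \<in> Inn n" unfolding Inn_def by blast
  next
    fix f assume f: "f \<in> Inn n"
    have B: "f \<in> Bij (Q n)" using f Inn_Bij by auto
    have im: "inv\<^bsub>BijGroup (Q n)\<^esub> f \<in> Mlt n" using f M.m_inv_closed unfolding Inn_def by blast
    have inj: "inj_on f (Q n)" using B unfolding Bij_def bij_betw_def by blast
    have fo: "f (cd_one n) = cd_one n" using f unfolding Inn_def by blast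
    have "inv_into (Q n) f (f (cd_one n)) = cd_one n" by (rule inv_into_f_f[OF inj one_Q])
    then have "inv_into (Q n) f (cd_one n) = cd_one n" unfolding fo .
    moreover
    then have "(inv\<^bsub>BijGroup (Q n)\<^esub> f) (cd_one n) = cd_one n"
      using inv_BijGroup[OF B] one_Q by simp
    ultimately show "inv\<^bsub>BijGroup (Q n)\<^esub> f \<in> Inn n" using im unfolding Inn_def by blast
  qed
qed

lemma Inn_mult: "f \<in> Inn n \<Longrightarrow> g \<in> Inn n \<Longrightarrow> f \<otimes>\<^bsub>InnGroup n\<^esub> g = compose (Q n) f g"
  unfolding InnGroup_def using BijGroup_mult[OF Inn_Bij Inn_Bij] by simp

lemma Inn_comm_pt: "f \<in> Inn n \<Longrightarrow> g \<in> Inn n \<Longrightarrow> x \<in> Q n \<Longrightarrow> f (g x) = g (f x)"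
proof -
  assume f: "f \<in> Inn n" and g: "g \<in> Inn n" and x: "x \<in> Q n"
  have nf: "f (cd_neg x) = cd_neg (f x)" and ng: "g (cd_neg x) = cd_neg (g x)"
    using Inn_neg[OF f x] Inn_neg[OF g x] by auto
  from Inn_sign[OF f x] show ?thesis
  proof
    assume a: "f x = x"
    from Inn_sign[OF g x] show ?thesis
    proof
      assume "g x = x" then show ?thesis using a by simp
    next
      assume "g x = cd_neg x" then show ?thesis using a nf by simp
    qed
  next
    assume a: "f x = cd_neg x"
    from Inn_sign[OF g x] show ?thesis
    proof
      assume "g x = x" then show ?thesis using a ng by simp
    next
      assume "g x = cd_neg x" then show ?thesis using a nf ng by simp
    qed
  qed
qed

lemma Inn_sq_pt: "f \<in> Inn n \<Longrightarrow> x \<in> Q n \<Longrightarrow> f (f x) = x"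
proof -
  assume f: "f \<in> Inn n" and x: "x \<in> Q n"
  from Inn_sign[OF f x] show ?thesis
  proof
    assume "f x = x" then show ?thesis by simp
  next
    assume "f x = cd_neg x" then show ?thesis using Inn_neg[OF f x] by simp
  qed
qed

lemma InnGroup_comm: "comm_group (InnGroup n)"
proof -
  have G: "group (InnGroup n)" unfolding InnGroup_def
    by (rule subgroup.subgroup_is_group[OF Inn_sub group_BijGroup])
  show ?thesis
  proof (rule group.group_comm_groupI[OF G])
    fix f g assume "f \<in> carrier (InnGroup n)" "g \<in> carrier (InnGroup n)"
    then have f: "f \<in> Inn n" and g: "g \<in> Inn n" unfolding InnGroup_def by auto
    show "f \<otimes>\<^bsub>InnGroup n\<^esub> g = g \<otimes>\<^bsub>InnGroup n\<^esub> f"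
      unfolding Inn_mult[OF f g] Inn_mult[OF g f] compose_def
      using Inn_comm_pt[OF f g] by (auto intro!: ext)
  qed
qed

lemma InnGroup_sq: "\<forall>f \<in> carrier (InnGroup n). f \<otimes>\<^bsub>InnGroup n\<^esub> f = \<one>\<^bsub>InnGroup n\<^esub>"
proof
  fix f assume "f \<in> carrier (InnGroup n)"
  then have f: "f \<in> Inn n" unfolding InnGroup_def by auto
  show "f \<otimes>\<^bsub>InnGroup n\<^esub> f = \<one>\<^bsub>InnGroup n\<^esub>"
    unfolding Inn_mult[OF f f] compose_def
    using Inn_sq_pt[OF f] by (auto simp: InnGroup_def BijGroup_def intro!: ext)
qed



lemma even_subsets: "finite A \<Longrightarrow> A \<noteq> {} \<Longrightarrow> card {W. W \<subseteq> A \<and> even (card W)} = 2 ^ (card A - 1)"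
proof -
  assume fA: "finite A" and ne: "A \<noteq> {}"
  obtain a where a: "a \<in> A" using ne by blast
  let ?E = "{W. W \<subseteq> A \<and> even (card W)}" and ?O = "{W. W \<subseteq> A \<and> odd (card W)}"
  define t where "t = (\<lambda>W. if a \<in> W then W - {a} else insert a W)"
  have fW: "\<And>W. W \<subseteq> A \<Longrightarrow> finite W" using fA finite_subset by blast
  have par: "\<And>W. W \<subseteq> A \<Longrightarrow> even (card (t W)) \<longleftrightarrow> odd (card W)"
  proof -
    fix W assume W: "W \<subseteq> A"
    show "even (card (t W)) \<longleftrightarrow> odd (card W)"
    proof (cases "a \<in> W")
      case True
      then have "card W = Suc (card (W - {a}))" by (rule card_Suc_Diff1[OF fW[OF W], symmetric])
      then show ?thesis using True unfolding t_def by simp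
    next
      case False
      then show ?thesis using fW[OF W] unfolding t_def by simp
    qed
  qed
  have tt: "\<And>W. t (t W) = W" unfolding t_def by auto
  have sub: "\<And>W. W \<subseteq> A \<Longrightarrow> t W \<subseteq> A" using a unfolding t_def by auto
  have "bij_betw t ?E ?O"
  proof (rule bij_betw_byWitness[where f' = t])
    show "\<forall>W\<in>?E. t (t W) = W" using tt by blast
    show "\<forall>W\<in>?O. t (t W) = W" using tt by blast
    show "t ` ?E \<subseteq> ?O" using sub par by blast
    show "t ` ?O \<subseteq> ?E" using sub par by blast
  qed
  then have c1: "card ?E = card ?O" by (rule bij_betw_same_card)
  have "Pow A = ?E \<union> ?O" by auto
  moreover have "?E \<inter> ?O = {}" by auto
  moreover have "finite ?E" "finite ?O" using fA by auto
  ultimately have "card (Pow A) = card ?E + card ?O" by (metis card_Un_disjoint)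
  then have "2 ^ card A = 2 * card ?E" using c1 card_Pow[of A] fA by simp
  moreover have "card A \<ge> 1" using fA ne by (simp add: Suc_le_eq card_gt_0_iff)
  ultimately show ?thesis by (cases "card A") auto
qed

definition P1 :: "nat \<Rightarrow> cd set" where "P1 n = P n - {cd_one n}"

definition fl :: "nat \<Rightarrow> (cd \<Rightarrow> cd) \<Rightarrow> cd set" where
  "fl n f = {x \<in> P1 n. f x = cd_neg x}"

lemma one_P: "cd_one n \<in> P n" unfolding P_def using one_Q sg_one by auto

lemma card_P1: "card (P1 n) = 2 ^ n - 1"
  unfolding P1_def using card_P one_P finite_P by (simp add: card_Diff_singleton)

lemma P1_nre: "y \<in> P1 n \<Longrightarrow> \<not> re y"
proof
  assume y: "y \<in> P1 n" and r: "re y"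
  then have yq: "y \<in> Q n" "\<not> sg y" "y \<noteq> cd_one n" unfolding P1_def P_def by auto
  then have "y = cd_neg (cd_one n)" using re_cases r by blast
  then show False using yq sg_neg[OF one_Q] sg_one by simp
qed

lemma fl_cnt: "f \<in> Inn n \<Longrightarrow> cnt n f = card (fl n f)"
proof -
  assume f: "f \<in> Inn n"
  have "{x \<in> P n. sg (f x)} = fl n f"
  proof (rule equalityI; rule subsetI)
    fix x assume "x \<in> {x \<in> P n. sg (f x)}"
    then have x: "x \<in> Q n" "\<not> sg x" "sg (f x)" unfolding P_def by auto
    have fo: "f (cd_one n) = cd_one n" using Inn_good[OF f] by blast
    have "x \<noteq> cd_one n" using x fo sg_one by auto
    moreover have "f x = cd_neg x" using Inn_sign[OF f x(1)] x by auto
    ultimately show "x \<in> fl n f" unfolding fl_def P1_def P_def using x by auto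
  next
    fix x assume "x \<in> fl n f"
    then have x: "x \<in> Q n" "\<not> sg x" "f x = cd_neg x" unfolding fl_def P1_def P_def by auto
    then show "x \<in> {x \<in> P n. sg (f x)}" unfolding P_def using sg_neg[OF x(1)] by auto
  qed
  then show ?thesis unfolding cnt_def by simp
qed

lemma Inn_ext: "f \<in> Inn n \<Longrightarrow> g \<in> Inn n \<Longrightarrow> (\<And>x. x \<in> Q n \<Longrightarrow> f x = g x) \<Longrightarrow> f = g"
proof -
  assume f: "f \<in> Inn n" and g: "g \<in> Inn n" and e: "\<And>x. x \<in> Q n \<Longrightarrow> f x = g x"
  have "f \<in> extensional (Q n)" "g \<in> extensional (Q n)" using Inn_Bij[OF f] Inn_Bij[OF g]
    by (auto simp: Bij_def)
  then show ?thesis using e by (rule extensionalityI)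
qed

lemma fl_inj: "f \<in> Inn n \<Longrightarrow> g \<in> Inn n \<Longrightarrow> fl n f = fl n g \<Longrightarrow> f = g"
proof -
  assume f: "f \<in> Inn n" and g: "g \<in> Inn n" and e: "fl n f = fl n g"
  have fo: "f (cd_one n) = cd_one n" using Inn_good[OF f] by blast
  have go: "g (cd_one n) = cd_one n" using Inn_good[OF g] by blast
  have pos: "\<And>y. y \<in> P n \<Longrightarrow> f y = g y"
  proof -
    fix y assume y: "y \<in> P n"
    then have yq: "y \<in> Q n" unfolding P_def by auto
    show "f y = g y"
    proof (cases "y = cd_one n")
      case True then show ?thesis using fo go by simp
    next
      case False
      then have "y \<in> P1 n" using y unfolding P1_def by auto
      then have "f y = cd_neg y \<longleftrightarrow> g y = cd_neg y" using e unfolding fl_def by blast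
      then show ?thesis using Inn_sign[OF f yq] Inn_sign[OF g yq] neg_neq[OF yq] by metis
    qed
  qed
  show ?thesis
  proof (rule Inn_ext[OF f g])
    fix x assume x: "x \<in> Q n"
    show "f x = g x"
    proof (cases "sg x")
      case False then show ?thesis using pos x unfolding P_def by auto
    next
      case True
      then have "cd_neg x \<in> P n" unfolding P_def using Q_neg[OF x] sg_neg[OF x] by auto
      then have "f (cd_neg x) = g (cd_neg x)" by (rule pos)
      then have "cd_neg (f x) = cd_neg (g x)" using Inn_neg[OF f x] Inn_neg[OF g x] by simp
      then show ?thesis by (metis neg_neg)
    qed
  qed
qed

lemma fl_mult: "f \<in> Inn n \<Longrightarrow> g \<in> Inn n \<Longrightarrow>
   fl n (f \<otimes>\<^bsub>BijGroup (Q n)\<^esub> g) = (fl n f - fl n g) \<union> (fl n g - fl n f)"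
proof -
  assume f: "f \<in> Inn n" and g: "g \<in> Inn n"
  have m: "f \<otimes>\<^bsub>BijGroup (Q n)\<^esub> g = compose (Q n) f g"
    using BijGroup_mult[OF Inn_Bij[OF f] Inn_Bij[OF g]] .
  have pt: "\<And>x. x \<in> Q n \<Longrightarrow> (f (g x) = cd_neg x) \<longleftrightarrow> \<not> ((f x = cd_neg x) \<longleftrightarrow> (g x = cd_neg x))"
  proof -
    fix x assume x: "x \<in> Q n"
    have nn: "cd_neg x \<noteq> x" using neg_neq[OF x] .
    from Inn_sign[OF g x] show "?thesis x"
    proof
      assume a: "g x = x"
      show ?thesis using a Inn_sign[OF f x] nn by auto
    next
      assume a: "g x = cd_neg x"
      then have "f (g x) = cd_neg (f x)" using Inn_neg[OF f x] by simp
      then show ?thesis using a Inn_sign[OF f x] nn by (metis neg_neg)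
    qed
  qed
  show ?thesis unfolding m fl_def P1_def P_def compose_def using pt by auto
qed

definition Tm :: "nat \<Rightarrow> cd \<Rightarrow> cd \<Rightarrow> cd" where
  "Tm n x = inv\<^bsub>BijGroup (Q n)\<^esub> (Rmap n x) \<otimes>\<^bsub>BijGroup (Q n)\<^esub> Lmap n x"

lemma Tm_Mlt: "x \<in> Q n \<Longrightarrow> Tm n x \<in> Mlt n"
  unfolding Tm_def Mlt_def
  by (rule generate.eng) (auto intro: generate.inv generate.incl)

lemma Tm_eval: "x \<in> Q n \<Longrightarrow> y \<in> Q n \<Longrightarrow> Tm n x y = inv_into (Q n) (Rmap n x) (cd_mult x y)"
proof -
  assume x: "x \<in> Q n" and y: "y \<in> Q n"
  have BR: "Rmap n x \<in> Bij (Q n)" using R_Bij[OF x] .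
  have BL: "Lmap n x \<in> Bij (Q n)" using L_Bij[OF x] .
  have iB: "inv\<^bsub>BijGroup (Q n)\<^esub> (Rmap n x) \<in> Bij (Q n)"
    unfolding inv_BijGroup[OF BR] by (rule restrict_inv_into_Bij[OF BR])
  have "Tm n x y = (inv\<^bsub>BijGroup (Q n)\<^esub> (Rmap n x)) (Lmap n x y)"
    unfolding Tm_def BijGroup_mult[OF iB BL] compose_def using y by simp
  also have "\<dots> = inv_into (Q n) (Rmap n x) (cd_mult x y)"
    unfolding inv_BijGroup[OF BR] Lmap_def using y mult_Q[OF x y] by simp
  finally show ?thesis .
qed

lemma invR_eq: "x \<in> Q n \<Longrightarrow> z \<in> Q n \<Longrightarrow> inv_into (Q n) (Rmap n x) (cd_mult z x) = z"
proof -
  assume x: "x \<in> Q n" and z: "z \<in> Q n"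
  have inj: "inj_on (Rmap n x) (Q n)" using R_Bij[OF x] unfolding Bij_def bij_betw_def by blast
  have "inv_into (Q n) (Rmap n x) (Rmap n x z) = z" by (rule inv_into_f_f[OF inj z])
  then show ?thesis unfolding Rmap_def using z by simp
qed

lemma Tm_Inn: "x \<in> Q n \<Longrightarrow> Tm n x \<in> Inn n"
proof -
  assume x: "x \<in> Q n"
  have "Tm n x (cd_one n) = inv_into (Q n) (Rmap n x) (cd_mult x (cd_one n))"
    using Tm_eval[OF x one_Q] .
  also have "\<dots> = inv_into (Q n) (Rmap n x) (cd_mult (cd_one n) x)"
    using mult_one[OF x] one_mult[OF x] by simp
  also have "\<dots> = cd_one n" using invR_eq[OF x one_Q] .
  finally show ?thesis unfolding Inn_def using Tm_Mlt[OF x] by simp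
qed

lemma fl_Tm: "x \<in> P1 n \<Longrightarrow> fl n (Tm n x) = P1 n - {x}"
proof -
  assume xP: "x \<in> P1 n"
  then have x: "x \<in> Q n" "\<not> sg x" "\<not> re x" using P1_nre unfolding P1_def P_def by auto
  have pt: "\<And>y. y \<in> P1 n \<Longrightarrow> Tm n x y = cd_neg y \<longleftrightarrow> y \<noteq> x"
  proof -
    fix y assume yP: "y \<in> P1 n"
    then have y: "y \<in> Q n" "\<not> sg y" "\<not> re y" using P1_nre unfolding P1_def P_def by auto
    have c: "cd_mult y x = (if idx x = idx y then cd_mult x y else cd_neg (cd_mult x y))"
      using comm[OF x(1) y(1)] x y by simp
    show "Tm n x y = cd_neg y \<longleftrightarrow> y \<noteq> x"
    proof (cases "idx x = idx y")
      case True
      then have "Tm n x y = y" using Tm_eval[OF x(1) y(1)] invR_eq[OF x(1) y(1)] c by simp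
      moreover have "y = x" using same_idx[OF x(1) y(1) True] x y sg_neg[OF x(1)] by auto
      ultimately show ?thesis using neg_neq[OF y(1)] by simp
    next
      case False
      then have "cd_mult (cd_neg y) x = cd_mult x y" using c mult_negL[OF y(1) x(1)] by simp
      then have "Tm n x y = cd_neg y" using Tm_eval[OF x(1) y(1)] invR_eq[OF x(1) Q_neg[OF y(1)]] by simp
      moreover have "y \<noteq> x" using False by auto
      ultimately show ?thesis by simp
    qed
  qed
  show ?thesis unfolding fl_def using pt xP by auto
qed

lemma fl_sub: "fl n f \<subseteq> P1 n" unfolding fl_def by auto

lemma fl_surj: "W \<subseteq> P1 n \<Longrightarrow> even (card W) \<Longrightarrow> \<exists>f\<in>Inn n. fl n f = W"
proof (induction "card W" arbitrary: W rule: less_induct)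
  case less
  have fW: "finite W" using less.prems(1) finite_P finite_subset unfolding P1_def by blast
  show ?case
  proof (cases "W = {}")
    case True
    have "\<one>\<^bsub>BijGroup (Q n)\<^esub> \<in> Inn n" using subgroup.one_closed[OF Inn_sub] .
    moreover have "fl n (\<one>\<^bsub>BijGroup (Q n)\<^esub>) = {}"
      unfolding fl_def P1_def P_def by (auto simp: BijGroup_def dest: neg_neq)
    ultimately show ?thesis using True by blast
  next
    case False
    then obtain a where a: "a \<in> W" by blast
    have "card W = Suc (card (W - {a}))" by (rule card_Suc_Diff1[OF fW a, symmetric])
    then have "odd (card (W - {a}))" using less.prems(2) by simp
    then have "W - {a} \<noteq> {}" by (metis card.empty even_zero)
    then obtain b where b: "b \<in> W" "b \<noteq> a" by blast
    let ?W' = "W - {a, b}"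
    have ab: "{a, b} \<subseteq> W" using a b by auto
    have c2: "card {a, b} = 2" using b by simp
    have "card ?W' = card W - card {a, b}" by (rule card_Diff_subset) (use ab in auto)
    moreover have "card {a, b} \<le> card W" by (rule card_mono[OF fW ab])
    ultimately have cW: "card W = card ?W' + 2" using c2 by simp
    have "card ?W' < card W" using cW by simp
    moreover have "?W' \<subseteq> P1 n" using less.prems(1) by auto
    moreover have "even (card ?W')" using cW less.prems(2) by simp
    ultimately obtain g where g: "g \<in> Inn n" "fl n g = ?W'" using less.hyps by blast
    have aP: "a \<in> P1 n" and bP: "b \<in> P1 n" using a b less.prems(1) by auto
    have Ta: "Tm n a \<in> Inn n" and Tb: "Tm n b \<in> Inn n"
      using Tm_Inn aP bP unfolding P1_def P_def by auto
    let ?h = "Tm n a \<otimes>\<^bsub>BijGroup (Q n)\<^esub> Tm n b"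
    have h: "?h \<in> Inn n" using subgroup.m_closed[OF Inn_sub Ta Tb] .
    have flh: "fl n ?h = {a, b}"
      unfolding fl_mult[OF Ta Tb] fl_Tm[OF aP] fl_Tm[OF bP] using aP bP b by auto
    have "?h \<otimes>\<^bsub>BijGroup (Q n)\<^esub> g \<in> Inn n" using subgroup.m_closed[OF Inn_sub h g(1)] .
    moreover have "fl n (?h \<otimes>\<^bsub>BijGroup (Q n)\<^esub> g) = W"
      unfolding fl_mult[OF h g(1)] flh g(2) using a b by auto
    ultimately show ?thesis by blast
  qed
qed

lemma fl_cnt_even: "2 \<le> n \<Longrightarrow> f \<in> Inn n \<Longrightarrow> even (card (fl n f))"
proof -
  assume n: "2 \<le> n" and f: "f \<in> Inn n"
  have "f \<in> Mlt n" using f unfolding Inn_def by blast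
  then have "even (cnt n f)" by (rule Mlt_even[OF n])
  then show ?thesis using fl_cnt[OF f] by simp
qed

lemma card_Inn: "2 \<le> n \<Longrightarrow> card (Inn n) = 2 ^ (2 ^ n - 2)"
proof -
  assume n: "2 \<le> n"
  have "bij_betw (fl n) (Inn n) {W. W \<subseteq> P1 n \<and> even (card W)}"
    unfolding bij_betw_def
  proof
    show "inj_on (fl n) (Inn n)" by (rule inj_onI) (rule fl_inj)
    show "fl n ` Inn n = {W. W \<subseteq> P1 n \<and> even (card W)}"
    proof (rule equalityI; rule subsetI)
      fix W assume "W \<in> fl n ` Inn n"
      then obtain f where f: "f \<in> Inn n" "W = fl n f" by blast
      then show "W \<in> {W. W \<subseteq> P1 n \<and> even (card W)}" using fl_sub fl_cnt_even[OF n f(1)] by blast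
    next
      fix W assume "W \<in> {W. W \<subseteq> P1 n \<and> even (card W)}"
      then obtain f where "f \<in> Inn n" "fl n f = W" using fl_surj by blast
      then show "W \<in> fl n ` Inn n" by blast
    qed
  qed
  then have "card (Inn n) = card {W. W \<subseteq> P1 n \<and> even (card W)}" by (rule bij_betw_same_card)
  also have "\<dots> = 2 ^ (card (P1 n) - 1)"
  proof (rule even_subsets)
    show "finite (P1 n)" using finite_P unfolding P1_def by simp
    have "1 < (2::nat) ^ n" by (rule one_less_power) (use n in auto)
    then have "card (P1 n) \<noteq> 0" unfolding card_P1 by simp
    then show "P1 n \<noteq> {}" by auto
  qed
  also have "\<dots> = 2 ^ (2 ^ n - 2)" unfolding card_P1 by simp
  finally show ?thesis .
qed



lemma Q1: "Q (Suc 0) = {Pr (Sc 1) False, Pr (Sc (-1)) False, Pr (Sc 1) True, Pr (Sc (-1)) True}"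
  by auto

lemma assoc1: "x \<in> Q (Suc 0) \<Longrightarrow> y \<in> Q (Suc 0) \<Longrightarrow> z \<in> Q (Suc 0) \<Longrightarrow>
  cd_mult x (cd_mult y z) = cd_mult (cd_mult x y) z"
  unfolding Q1 by auto

lemma comm1: "x \<in> Q (Suc 0) \<Longrightarrow> y \<in> Q (Suc 0) \<Longrightarrow> cd_mult x y = cd_mult y x"
  unfolding Q1 by auto

lemma tr_L: "z \<in> Q n \<Longrightarrow> \<forall>x\<in>Q n. Lmap n z x = cd_mult (Lmap n z (cd_one n)) x"
proof
  fix x assume z: "z \<in> Q n" and x: "x \<in> Q n"
  have "Lmap n z (cd_one n) = z" unfolding Lmap_def using one_Q[of n] mult_one[OF z]
    by (simp only: restrict_apply')
  then show "Lmap n z x = cd_mult (Lmap n z (cd_one n)) x" unfolding Lmap_def using x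
    by (simp only: restrict_apply')
qed

lemma tr_R: "z \<in> Q (Suc 0) \<Longrightarrow> \<forall>x\<in>Q (Suc 0). Rmap (Suc 0) z x = cd_mult (Rmap (Suc 0) z (cd_one (Suc 0))) x"
proof
  fix x assume z: "z \<in> Q (Suc 0)" and x: "x \<in> Q (Suc 0)"
  have "Rmap (Suc 0) z (cd_one (Suc 0)) = z" unfolding Rmap_def using one_Q[of "Suc 0"] one_mult[OF z]
    by (simp only: restrict_apply')
  then show "Rmap (Suc 0) z x = cd_mult (Rmap (Suc 0) z (cd_one (Suc 0))) x" unfolding Rmap_def using x
    comm1[OF x z] by (simp only: restrict_apply')
qed

lemma Mlt1_tr: "f \<in> Mlt (Suc 0) \<Longrightarrow> \<forall>x\<in>Q (Suc 0). f x = cd_mult (f (cd_one (Suc 0))) x"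
proof -
  let ?Q = "Q (Suc 0)" and ?o = "cd_one (Suc 0)"
  assume f: "f \<in> Mlt (Suc 0)"
  then show ?thesis unfolding Mlt_def
  proof (induction rule: generate.induct)
    case one
    have e: "\<one>\<^bsub>BijGroup ?Q\<^esub> = restrict (\<lambda>x. x) ?Q" by (simp add: BijGroup_def)
    show ?case unfolding e
    proof
      fix x assume x: "x \<in> ?Q"
      show "restrict (\<lambda>x. x) ?Q x = cd_mult (restrict (\<lambda>x. x) ?Q ?o) x"
        using x one_Q[of "Suc 0"] one_mult[OF x] by (simp only: restrict_apply')
    qed
  next
    case (incl h)
    then obtain z where z: "z \<in> ?Q" "h = Lmap (Suc 0) z \<or> h = Rmap (Suc 0) z" by blast
    from z(2) show ?case
    proof
      assume "h = Lmap (Suc 0) z"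
      then show ?thesis using tr_L[OF z(1)] by simp
    next
      assume "h = Rmap (Suc 0) z"
      then show ?thesis using tr_R[OF z(1)] by simp
    qed
  next
    case (inv h)
    then have hM: "h \<in> Mlt (Suc 0)" unfolding Mlt_def by (rule generate.incl)
    have tr: "\<forall>x\<in>?Q. h x = cd_mult (h ?o) x"
    proof -
      obtain z where z: "z \<in> ?Q" "h = Lmap (Suc 0) z \<or> h = Rmap (Suc 0) z" using inv by blast
      from z(2) show ?thesis
      proof
        assume "h = Lmap (Suc 0) z"
        then show ?thesis using tr_L[OF z(1)] by simp
      next
        assume "h = Rmap (Suc 0) z"
        then show ?thesis using tr_R[OF z(1)] by simp
      qed
    qed
    have B: "h \<in> Bij ?Q" using Mlt_good[OF hM] unfolding good_def by blast
    have inj: "inj_on h ?Q" using B unfolding Bij_def bij_betw_def by blast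
    let ?d = "inv_into ?Q h ?o"
    have d: "?d \<in> ?Q" "h ?d = ?o" using Bij_inv[OF B one_Q] by auto
    have ho: "h ?o \<in> ?Q" using Bij_in[OF B one_Q] .
    have cd: "cd_mult (h ?o) ?d = ?o" using tr d by simp
    show ?case
    proof
      fix x assume x: "x \<in> ?Q"
      have dx: "cd_mult ?d x \<in> ?Q" using mult_Q[OF d(1) x] .
      have "h (cd_mult ?d x) = cd_mult (h ?o) (cd_mult ?d x)" using tr dx by blast
      also have "\<dots> = cd_mult (cd_mult (h ?o) ?d) x" using assoc1[OF ho d(1) x] .
      also have "\<dots> = x" using cd one_mult[OF x] by simp
      finally have "inv_into ?Q h x = cd_mult ?d x"
        using inv_into_f_f[OF inj dx] by simp
      then show "(inv\<^bsub>BijGroup ?Q\<^esub> h) x = cd_mult ((inv\<^bsub>BijGroup ?Q\<^esub> h) ?o) x"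
        unfolding inv_BijGroup[OF B] using x one_Q[of "Suc 0"] by (simp only: restrict_apply')
    qed
  next
    case (eng h1 h2)
    have m1: "h1 \<in> Mlt (Suc 0)" unfolding Mlt_def using eng(1) .
    have m2: "h2 \<in> Mlt (Suc 0)" unfolding Mlt_def using eng(2) .
    have B1: "h1 \<in> Bij ?Q" using Mlt_good[OF m1] unfolding good_def by blast
    have B2: "h2 \<in> Bij ?Q" using Mlt_good[OF m2] unfolding good_def by blast
    have c1: "h1 ?o \<in> ?Q" using Bij_in[OF B1 one_Q] .
    have c2: "h2 ?o \<in> ?Q" using Bij_in[OF B2 one_Q] .
    show ?case
    proof
      fix x assume x: "x \<in> ?Q"
      have "h1 (h2 x) = cd_mult (h1 ?o) (cd_mult (h2 ?o) x)"
        using eng.IH x Bij_in[OF B2 x] by simp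
      also have "\<dots> = cd_mult (cd_mult (h1 ?o) (h2 ?o)) x" using assoc1[OF c1 c2 x] .
      also have "cd_mult (h1 ?o) (h2 ?o) = h1 (h2 ?o)" using eng.IH c2 by simp
      finally show "(h1 \<otimes>\<^bsub>BijGroup ?Q\<^esub> h2) x = cd_mult ((h1 \<otimes>\<^bsub>BijGroup ?Q\<^esub> h2) ?o) x"
        unfolding BijGroup_mult[OF B1 B2] compose_def using x one_Q[of "Suc 0"] by (simp only: restrict_apply')
    qed
  qed
qed

lemma card_Inn1: "card (Inn (Suc 0)) = 1"
proof -
  let ?Q = "Q (Suc 0)" and ?o = "cd_one (Suc 0)"
  have oI: "\<one>\<^bsub>BijGroup ?Q\<^esub> \<in> Inn (Suc 0)" using subgroup.one_closed[OF Inn_sub] .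
  have "Inn (Suc 0) = {\<one>\<^bsub>BijGroup ?Q\<^esub>}"
  proof (rule equalityI; rule subsetI)
    fix f assume f: "f \<in> Inn (Suc 0)"
    have fM: "f \<in> Mlt (Suc 0)" "f ?o = ?o" using f unfolding Inn_def by auto
    have "f = \<one>\<^bsub>BijGroup ?Q\<^esub>"
    proof (rule Inn_ext[OF f oI])
      fix x assume x: "x \<in> ?Q"
      have "f x = cd_mult ?o x" using Mlt1_tr[OF fM(1)] fM(2) x by simp
      then show "f x = \<one>\<^bsub>BijGroup ?Q\<^esub> x" using one_mult[OF x] x by (simp add: BijGroup_def)
    qed
    then show "f \<in> {\<one>\<^bsub>BijGroup ?Q\<^esub>}" by simp
  next
    fix f assume "f \<in> {\<one>\<^bsub>BijGroup ?Q\<^esub>}"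
    then show "f \<in> Inn (Suc 0)" using oI by simp
  qed
  then show ?thesis by simp
qed

theorem mainTheorem5:
  fixes n :: nat
  assumes "n \<ge> 1"
  shows "comm_group (InnGroup n)
       \<and> (\<forall>f \<in> carrier (InnGroup n). f \<otimes>\<^bsub>InnGroup n\<^esub> f = \<one>\<^bsub>InnGroup n\<^esub>)
       \<and> order (InnGroup n) = 2 ^ (2 ^ n - 2)
       \<and> (\<forall>f \<in> Inn n. \<forall>x \<in> Q n. f x = x \<or> f x = cd_neg x)"
proof (intro conjI)
  show "comm_group (InnGroup n)" by (rule InnGroup_comm)
  show "\<forall>f \<in> carrier (InnGroup n). f \<otimes>\<^bsub>InnGroup n\<^esub> f = \<one>\<^bsub>InnGroup n\<^esub>" by (rule InnGroup_sq)
  show "\<forall>f \<in> Inn n. \<forall>x \<in> Q n. f x = x \<or> f x = cd_neg x" using Inn_sign by blast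
  have o: "order (InnGroup n) = card (Inn n)" unfolding order_def InnGroup_def by simp
  show "order (InnGroup n) = 2 ^ (2 ^ n - 2)"
  proof (cases "n = 1")
    case True
    then show ?thesis unfolding o using card_Inn1 by simp
  next
    case False
    then have "2 \<le> n" using assms by simp
    then show ?thesis unfolding o by (rule card_Inn)
  qed
qed


end
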